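(* Let $A$ be a commutative ring. Then there is a natural bijection of right $\mathrm{GL}_2(A)$-sets $\pi_0(\Gamma(A))\leftrightarrow \mathrm{GE}_2(A)\backslash \mathrm{GL}_2(A)$.
   Context: $\Gamma(A)$ is the graph whose vertices are classes of unimodular rows $(a,b)\in A^2$ modulo multiplication by units, with $\{[u],[v]\}$ an edge when the matrix with rows $u,v$ lies in $\mathrm{GL}_2(A)$; $\mathrm{GL}_2(A)$ acts on the right by matrix multiplication. $E_2(A)$ is the subgroup of $\mathrm{SL}_2(A)$ generated by elementary matrices, and $\mathrm{GE}_2(A)$ is the subgroup of $\mathrm{GL}_2(A)$ generated by $E_2(A)$ and the invertible diagonal matrices. *)

theory Defs
  imports Main
begin

text \<open>Rows in A^2 are pairs; a 2x2 matrix is the pair of its two rows.\<close>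

type_synonym 'a row2 = "'a \<times> 'a"
type_synonym 'a mat2 = "'a row2 \<times> 'a row2"

definition row_mult :: "'a::comm_ring_1 row2 \<Rightarrow> 'a mat2 \<Rightarrow> 'a row2" where
  "row_mult u M = (fst u * fst (fst M) + snd u * fst (snd M),
                   fst u * snd (fst M) + snd u * snd (snd M))"

definition mat_mult :: "'a::comm_ring_1 mat2 \<Rightarrow> 'a mat2 \<Rightarrow> 'a mat2" where
  "mat_mult M N = (row_mult (fst M) N, row_mult (snd M) N)"

definition mat_one :: "'a::comm_ring_1 mat2" where
  "mat_one = ((1, 0), (0, 1))"

definition GL2 :: "'a::comm_ring_1 mat2 set" where
  "GL2 = {M. \<exists>N. mat_mult M N = mat_one \<and> mat_mult N M = mat_one}"

text \<open>Subgroup generated by a set S of invertible matrices that is closed under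
  inverses (as is the case for the generating sets below): it is the submonoid
  of finite products of generators.\<close>
inductive_set gen_by :: "'a::comm_ring_1 mat2 set \<Rightarrow> 'a mat2 set" for S where
  gen_one: "mat_one \<in> gen_by S"
| gen_mult: "s \<in> S \<Longrightarrow> g \<in> gen_by S \<Longrightarrow> mat_mult s g \<in> gen_by S"

definition elementary :: "'a::comm_ring_1 mat2 set" where
  "elementary = {((1, x), (0, 1)) | x. True} \<union> {((1, 0), (x, 1)) | x. True}"

definition invertible_diagonal :: "'a::comm_ring_1 mat2 set" where
  "invertible_diagonal = {((u, 0), (0, v)) | u v. u dvd 1 \<and> v dvd 1}"

definition E2 :: "'a::comm_ring_1 mat2 set" where
  "E2 = gen_by elementary"

definition GE2 :: "'a::comm_ring_1 mat2 set" where
  "GE2 = gen_by (elementary \<union> invertible_diagonal)"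

definition unimodular :: "'a::comm_ring_1 row2 \<Rightarrow> bool" where
  "unimodular u \<longleftrightarrow> (\<exists>x y. fst u * x + snd u * y = 1)"

definition vclass :: "'a::comm_ring_1 row2 \<Rightarrow> 'a row2 set" where
  "vclass u = {(c * fst u, c * snd u) | c. c dvd 1}"

definition Gamma_V :: "'a::comm_ring_1 row2 set set" where
  "Gamma_V = {vclass u | u. unimodular u}"

definition Gamma_adj :: "'a::comm_ring_1 row2 set \<Rightarrow> 'a row2 set \<Rightarrow> bool" where
  "Gamma_adj X Y \<longleftrightarrow> X \<in> Gamma_V \<and> Y \<in> Gamma_V \<and>
     (\<exists>u v. X = vclass u \<and> Y = vclass v \<and> (u, v) \<in> GL2)"

definition component :: "'a::comm_ring_1 row2 set \<Rightarrow> 'a row2 set set" where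
  "component X = {Y \<in> Gamma_V. Gamma_adj\<^sup>*\<^sup>* X Y}"

definition pi0_Gamma :: "'a::comm_ring_1 row2 set set set" where
  "pi0_Gamma = {component X | X. X \<in> Gamma_V}"

definition vact :: "'a::comm_ring_1 row2 set \<Rightarrow> 'a mat2 \<Rightarrow> 'a row2 set" where
  "vact X g = (\<lambda>u. row_mult u g) ` X"

definition cact :: "'a::comm_ring_1 row2 set set \<Rightarrow> 'a mat2 \<Rightarrow> 'a row2 set set" where
  "cact C g = (\<lambda>X. vact X g) ` C"

definition coset_act :: "'a::comm_ring_1 mat2 set \<Rightarrow> 'a mat2 \<Rightarrow> 'a mat2 set" where
  "coset_act K g = (\<lambda>h. mat_mult h g) ` K"

definition GE2_cosets :: "'a::comm_ring_1 mat2 set set" where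
  "GE2_cosets = {coset_act GE2 g | g. g \<in> GL2}"

end

theory Submission
  imports Defs
begin

definition det2 :: "'a::comm_ring_1 mat2 \<Rightarrow> 'a" where
  "det2 M = fst (fst M) * snd (snd M) - snd (fst M) * fst (snd M)"

lemma unit_mult2: "(a::'a::comm_ring_1) dvd 1 \<Longrightarrow> b dvd 1 \<Longrightarrow> a * b dvd 1"
  using mult_dvd_mono[of a 1 b 1] by simp

lemma rm_simp[simp]: "row_mult (a,b) ((e,f),(g,h)) = (a*e+b*g, a*f+b*h)"
  by (simp add: row_mult_def)

lemma mm_simp[simp]: "mat_mult ((a,b),(c,d)) ((e,f),(g,h)) = ((a*e+b*g, a*f+b*h),(c*e+d*g, c*f+d*h))"
  by (simp add: mat_mult_def row_mult_def)

lemma det_simp[simp]: "det2 ((a,b),(c,d)) = a*d - b*c"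
  by (simp add: det2_def)

lemma mat_assoc: "mat_mult (mat_mult A B) C = mat_mult A (mat_mult B (C::'a::comm_ring_1 mat2))"
  by (cases A; cases B; cases C) (auto simp: algebra_simps)

lemma mat_one_left[simp]: "mat_mult mat_one M = (M::'a::comm_ring_1 mat2)"
  by (cases M) (auto simp: mat_one_def)

lemma mat_one_right[simp]: "mat_mult M mat_one = (M::'a::comm_ring_1 mat2)"
  by (cases M) (auto simp: mat_one_def)

lemma det_mult: "det2 (mat_mult M N) = det2 M * det2 (N::'a::comm_ring_1 mat2)"
  by (cases M; cases N) (auto simp: algebra_simps)

lemma det_one[simp]: "det2 (mat_one::'a::comm_ring_1 mat2) = 1"
  by (simp add: mat_one_def det2_def)

lemma GL2_iff: "(M::'a::comm_ring_1 mat2) \<in> GL2 \<longleftrightarrow> det2 M dvd 1"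
proof
  assume "M \<in> GL2"
  then obtain N where "mat_mult M N = mat_one" unfolding GL2_def by blast
  then have "det2 M * det2 N = 1" using det_mult[of M N] by simp
  then show "det2 M dvd 1" by (metis dvd_triv_left)
next
  assume "det2 M dvd 1"
  then obtain i where hi: "1 = det2 M * i" by (auto elim: dvdE)
  obtain a b c d where M: "M = ((a,b),(c,d))" by (metis prod.collapse)
  have hi': "(a*d - b*c) * i = 1" using hi M by simp
  let ?N = "((d*i, -b*i),(-c*i, a*i))"
  have "mat_mult M ?N = (((a*d-b*c)*i, 0),(0,(a*d-b*c)*i))"
       "mat_mult ?N M = (((a*d-b*c)*i, 0),(0,(a*d-b*c)*i))"
    unfolding M by (simp_all add: algebra_simps)
  then have "mat_mult M ?N = mat_one" "mat_mult ?N M = mat_one"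
    unfolding hi' mat_one_def by simp_all
  then show "M \<in> GL2" unfolding GL2_def by blast
qed

lemma GL2_mult: "A \<in> GL2 \<Longrightarrow> B \<in> GL2 \<Longrightarrow> mat_mult A B \<in> GL2"
  by (simp add: GL2_iff det_mult unit_mult2)

lemma gen_mult_closed: "a \<in> gen_by S \<Longrightarrow> b \<in> gen_by S \<Longrightarrow> mat_mult a b \<in> gen_by S"
  by (induction a rule: gen_by.induct) (auto simp: mat_assoc intro: gen_by.intros)

lemma gen_gen: "s \<in> S \<Longrightarrow> s \<in> gen_by S"
  using gen_by.gen_mult[OF _ gen_by.gen_one, of s S] by simp

lemma gen_sub: assumes "\<And>s. s \<in> S \<Longrightarrow> s \<in> GL2" "e \<in> gen_by S" shows "e \<in> GL2"
  using assms(2,1)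
proof (induction e rule: gen_by.induct)
  case gen_one
  then show ?case by (simp add: GL2_iff)
next
  case (gen_mult s g)
  then show ?case by (blast intro: GL2_mult)
qed

lemma S0_GL2: "s \<in> elementary \<union> invertible_diagonal \<Longrightarrow> s \<in> GL2"
  by (auto simp: elementary_def invertible_diagonal_def GL2_iff unit_mult2)

lemma GE2_GL2: "e \<in> GE2 \<Longrightarrow> e \<in> GL2"
  unfolding GE2_def by (rule gen_sub[OF S0_GL2])

lemma coset_iff: "h \<in> coset_act GE2 g \<longleftrightarrow> (\<exists>e\<in>GE2. h = mat_mult e g)"
  unfolding coset_act_def by (rule image_iff)

lemma coset_refl: "g \<in> coset_act GE2 g"
proof -
  have "mat_one \<in> GE2" unfolding GE2_def by (rule gen_by.gen_one)
  moreover have "g = mat_mult mat_one g" by simp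
  ultimately show ?thesis unfolding coset_iff by blast
qed

lemma coset_trans: "h \<in> coset_act GE2 q \<Longrightarrow> q \<in> coset_act GE2 g \<Longrightarrow> h \<in> coset_act GE2 g"
proof -
  assume "h \<in> coset_act GE2 q" "q \<in> coset_act GE2 g"
  then obtain e1 e2 where "e1 \<in> GE2" "h = mat_mult e1 q" "e2 \<in> GE2" "q = mat_mult e2 g"
    unfolding coset_iff by blast
  moreover have "mat_mult e1 e2 \<in> GE2"
    using calculation unfolding GE2_def by (blast intro: gen_mult_closed)
  ultimately show ?thesis unfolding coset_iff by (metis mat_assoc)
qed

lemma coset_sub: "g \<in> GL2 \<Longrightarrow> coset_act GE2 g \<subseteq> GL2"
  unfolding coset_iff subset_iff by (blast intro: GL2_mult GE2_GL2)

lemma vclass_self: "u \<in> vclass u"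
  unfolding vclass_def by (rule CollectI, rule exI[of _ 1]) simp

lemma vclass_eqD: "vclass u = vclass v \<Longrightarrow> \<exists>c. c dvd 1 \<and> v = (c * fst u, c * snd u)"
  using vclass_self[of v] unfolding vclass_def by auto

lemma vclass_scale:
  fixes c :: "'a::comm_ring_1"
  assumes c: "c dvd 1"
  shows "vclass (c * a, c * b) = vclass (a, b)"
proof -
  obtain ci where ci: "1 = c * ci" using c by (auto elim: dvdE)
  have "ci dvd 1" using ci by (metis dvd_triv_right)
  show ?thesis
  proof
    show "vclass (c * a, c * b) \<subseteq> vclass (a, b)"
    proof
      fix x assume "x \<in> vclass (c * a, c * b)"
      then obtain d where d: "d dvd 1" "x = (d * (c * a), d * (c * b))" unfolding vclass_def by auto
      then have "x = ((d*c) * a, (d*c) * b)" "d * c dvd 1" using c unit_mult2 by (auto simp: mult.assoc)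
      then show "x \<in> vclass (a, b)" unfolding vclass_def by auto
    qed
  next
    show "vclass (a, b) \<subseteq> vclass (c * a, c * b)"
    proof
      fix x assume "x \<in> vclass (a, b)"
      then obtain d where d: "d dvd 1" "x = (d * a, d * b)" unfolding vclass_def by auto
      have "d * a = (d * ci) * (c * a)" "d * b = (d * ci) * (c * b)"
        using ci by (simp_all add: algebra_simps) (metis mult.assoc mult.commute mult_1_right)+
      moreover have "d * ci dvd 1" using d \<open>ci dvd 1\<close> unit_mult2 by auto
      ultimately show "x \<in> vclass (c * a, c * b)" using d unfolding vclass_def by auto
    qed
  qed
qed

lemma row_mult_scale: "row_mult (c * a, c * b) g = (c * fst (row_mult (a, b) g), c * snd (row_mult (a, b) g))"
  by (simp add: row_mult_def algebra_simps)

lemma vact_vclass: "vact (vclass u) g = vclass (row_mult u g)"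
proof -
  have "vact (vclass u) g = (\<lambda>c. row_mult (c * fst u, c * snd u) g) ` {c. c dvd 1}"
    unfolding vact_def vclass_def by auto
  also have "\<dots> = (\<lambda>c. (c * fst (row_mult u g), c * snd (row_mult u g))) ` {c. c dvd 1}"
    using row_mult_scale[of _ "fst u" "snd u" g] by simp
  also have "\<dots> = vclass (row_mult u g)" unfolding vclass_def by auto
  finally show ?thesis .
qed

lemma fst_mat_mult: "fst (mat_mult h g) = row_mult (fst h) g"
  by (simp add: mat_mult_def)

lemma GL2_unimod: "g \<in> GL2 \<Longrightarrow> unimodular (fst g)"
proof -
  assume "g \<in> GL2"
  then have "det2 g dvd 1" by (simp add: GL2_iff)
  then obtain i where i: "1 = det2 g * i" by (auto elim: dvdE)
  obtain a b c d where g: "g = ((a,b),(c,d))" by (metis prod.collapse)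
  have "det2 g * i = a * (d * i) + b * (- (c * i))" using g by (simp add: algebra_simps)
  then have "a * (d * i) + b * (- (c * i)) = 1" using i by simp
  then show ?thesis unfolding unimodular_def g fst_conv snd_conv by blast
qed

lemma unimod_ext: "unimodular u \<Longrightarrow> \<exists>g\<in>GL2. fst g = u"
proof -
  assume "unimodular u"
  then obtain x y where xy: "fst u * x + snd u * y = 1" unfolding unimodular_def by auto
  have "det2 (u, (-y, x)) = 1" using xy by (simp add: det2_def algebra_simps)
  then have "(u, (-y, x)) \<in> GL2" by (simp add: GL2_iff)
  then show ?thesis by force
qed

lemma GL2_V: "g \<in> GL2 \<Longrightarrow> vclass (fst g) \<in> Gamma_V"
  using GL2_unimod unfolding Gamma_V_def by blast

lemma swap_GL2: "(u, v) \<in> GL2 \<Longrightarrow> (v, u) \<in> GL2"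
proof -
  assume "(u, v) \<in> GL2"
  moreover have "det2 (v, u) = - det2 (u, v)" by (simp add: det2_def algebra_simps)
  ultimately show ?thesis by (simp add: GL2_iff)
qed

lemma adj_GL2: "(u, v) \<in> GL2 \<Longrightarrow> Gamma_adj (vclass u) (vclass v)"
proof -
  assume a: "(u, v) \<in> GL2"
  have "vclass u \<in> Gamma_V" "vclass v \<in> Gamma_V"
    using GL2_V[of "(u,v)"] GL2_V[of "(v,u)"] swap_GL2[of u v] a by auto
  then show ?thesis unfolding Gamma_adj_def using a by blast
qed

lemma gen_step:
  assumes g: "g \<in> GL2" and s: "s \<in> elementary \<union> invertible_diagonal"
  shows "Gamma_adj\<^sup>*\<^sup>* (vclass (fst g)) (vclass (fst (mat_mult s g)))"
proof -
  obtain a b c d where gd: "g = ((a,b),(c,d))" by (metis prod.collapse)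
  have dg: "det2 g dvd 1" using g by (simp add: GL2_iff)
  consider (E12) x where "s = ((1,x),(0,1))" | (E21) x where "s = ((1,0),(x,1))"
    | (D) u v where "s = ((u,0),(0,v))" "u dvd 1" "v dvd 1"
    using s unfolding elementary_def invertible_diagonal_def by blast
  then show ?thesis
  proof cases
    case (E12 x)
    have fs: "fst (mat_mult s g) = (a + x * c, b + x * d)" using E12 gd by simp
    have a1: "Gamma_adj (vclass (a,b)) (vclass (c,d))" using adj_GL2 g gd by simp
    have "det2 ((c,d),(a + x * c, b + x * d)) = - det2 g" using gd by (simp add: algebra_simps)
    then have "((c,d),(a + x * c, b + x * d)) \<in> GL2" using dg by (simp add: GL2_iff)
    then have a2: "Gamma_adj (vclass (c,d)) (vclass (a + x * c, b + x * d))" by (rule adj_GL2)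
    have "Gamma_adj\<^sup>*\<^sup>* (vclass (a,b)) (vclass (a + x * c, b + x * d))"
      using a1 a2 by (meson rtranclp.rtrancl_into_rtrancl r_into_rtranclp)
    then show ?thesis unfolding fs unfolding gd fst_conv .
  next
    case (E21 x)
    have fs: "fst (mat_mult s g) = (a, b)" using E21 gd by simp
    show ?thesis unfolding fs unfolding gd by simp
  next
    case (D u v)
    have fs: "fst (mat_mult s g) = (u * a, u * b)" using D gd by simp
    show ?thesis unfolding fs unfolding gd using vclass_scale[OF D(2)] by simp
  qed
qed

lemma coset_conn:
  assumes "e \<in> GE2" "g \<in> GL2"
  shows "Gamma_adj\<^sup>*\<^sup>* (vclass (fst g)) (vclass (fst (mat_mult e g)))"
  using assms unfolding GE2_def
proof (induction e rule: gen_by.induct)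
  case gen_one
  then show ?case by simp
next
  case (gen_mult s e)
  have "e \<in> GE2" using gen_mult(2) unfolding GE2_def .
  then have "mat_mult e g \<in> GL2" using gen_mult(4) by (blast intro: GL2_mult GE2_GL2)
  then have "Gamma_adj\<^sup>*\<^sup>* (vclass (fst (mat_mult e g))) (vclass (fst (mat_mult s (mat_mult e g))))"
    using gen_step gen_mult(1) by blast
  then show ?case using gen_mult(3)[OF gen_mult(4)] unfolding mat_assoc by simp
qed

lemma same_class_coset:
  assumes g: "g \<in> GL2" and h: "h \<in> GL2" and eq: "vclass (fst g) = vclass (fst h)"
  shows "h \<in> coset_act GE2 g"
proof -
  obtain c where c: "c dvd 1" "fst h = (c * fst (fst g), c * snd (fst g))"
    using vclass_eqD[OF eq] by blast
  obtain N where N: "mat_mult g N = mat_one" "mat_mult N g = mat_one" using g unfolding GL2_def by blast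
  have NG: "N \<in> GL2" using N unfolding GL2_def by blast
  define e where "e = mat_mult h N"
  have eg: "mat_mult e g = h" unfolding e_def mat_assoc N by simp
  have eGL: "e \<in> GL2" unfolding e_def using h NG by (rule GL2_mult)
  have "row_mult (fst g) N = (1, 0)" using N(1) fst_mat_mult[of g N] by (simp add: mat_one_def)
  then have fe: "fst e = (c, 0)"
    unfolding e_def fst_mat_mult c(2) row_mult_scale[of c "fst (fst g)" "snd (fst g)" N] by simp
  obtain d t where et: "e = ((c, 0), (d, t))" using fe by (metis prod.collapse)
  have "c * t dvd 1" using eGL et by (simp add: GL2_iff)
  then have t: "t dvd 1" by (rule dvd_mult_right)
  obtain ci where ci: "1 = c * ci" using c(1) by (auto elim: dvdE)
  have "mat_mult ((1, 0), (d * ci, 1)) (mat_mult ((c, 0), (0, t)) mat_one) = ((c, 0), (d * (c * ci), t))"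
    by (simp add: algebra_simps)
  then have eprod: "e = mat_mult ((1, 0), (d * ci, 1)) (mat_mult ((c, 0), (0, t)) mat_one)"
    using ci et by simp
  have "((1, 0), (d * ci, 1)) \<in> elementary \<union> invertible_diagonal" unfolding elementary_def by blast
  moreover have "((c, 0), (0, t)) \<in> elementary \<union> invertible_diagonal"
    unfolding invertible_diagonal_def using c(1) t by blast
  ultimately have "e \<in> GE2" unfolding eprod GE2_def by (blast intro: gen_by.intros)
  then show ?thesis unfolding coset_iff using eg by blast
qed

lemma w_GE2: "((0, 1), (-1, 0)) \<in> (GE2 :: 'a::comm_ring_1 mat2 set)"
proof -
  let ?A = "((1, 1), (0, 1)) :: 'a mat2"
  let ?B = "((1, 0), (-1, 1)) :: 'a mat2"
  have AB: "?A \<in> elementary \<union> invertible_diagonal" "?B \<in> elementary \<union> invertible_diagonal"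
    unfolding elementary_def by blast+
  have "mat_mult ?A (mat_mult ?B (mat_mult ?A mat_one)) = ((0, 1), (-1, 0))" by simp
  moreover have "mat_mult ?A (mat_mult ?B (mat_mult ?A mat_one)) \<in> GE2"
    unfolding GE2_def using AB by (blast intro: gen_by.intros)
  ultimately show ?thesis by simp
qed

lemma conn_coset:
  assumes "Gamma_adj\<^sup>*\<^sup>* X Y" "g \<in> GL2" "X = vclass (fst g)"
  shows "\<forall>h. h \<in> GL2 \<longrightarrow> Y = vclass (fst h) \<longrightarrow> h \<in> coset_act GE2 g"
  using assms(1)
proof (induction rule: rtranclp_induct)
  case base
  then show ?case using same_class_coset assms(2,3) by blast
next
  case (step y z)
  obtain u v where uv: "y = vclass u" "z = vclass v" "(u, v) \<in> GL2"
    using step(2) unfolding Gamma_adj_def by blast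
  have "y = vclass (fst (u, v))" using uv(1) by simp
  then have p: "(u, v) \<in> coset_act GE2 g" using step(3) uv(3) by blast
  define q where "q = mat_mult ((0, 1), (-1, 0)) (u, v)"
  have fq: "fst q = v" unfolding q_def by (cases u; cases v) simp
  have qp: "q \<in> coset_act GE2 (u, v)" unfolding q_def coset_iff using w_GE2 by blast
  have qg: "q \<in> coset_act GE2 g" using qp p by (rule coset_trans)
  have qGL: "q \<in> GL2" unfolding q_def using w_GE2 uv(3) by (blast intro: GL2_mult GE2_GL2)
  show ?case
  proof (intro allI impI)
    fix h assume "h \<in> GL2" "z = vclass (fst h)"
    then have "h \<in> coset_act GE2 q" using same_class_coset[OF qGL] fq uv(2) by simp
    then show "h \<in> coset_act GE2 g" using qg by (rule coset_trans)
  qed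
qed

lemma key:
  assumes "g \<in> GL2" "h \<in> GL2"
  shows "Gamma_adj\<^sup>*\<^sup>* (vclass (fst g)) (vclass (fst h)) \<longleftrightarrow> h \<in> coset_act GE2 g"
proof
  assume "Gamma_adj\<^sup>*\<^sup>* (vclass (fst g)) (vclass (fst h))"
  then show "h \<in> coset_act GE2 g" using conn_coset assms by blast
next
  assume "h \<in> coset_act GE2 g"
  then obtain e where "e \<in> GE2" "h = mat_mult e g" unfolding coset_iff by blast
  then show "Gamma_adj\<^sup>*\<^sup>* (vclass (fst g)) (vclass (fst h))" using coset_conn assms(1) by blast
qed

lemma comp_char:
  assumes k: "k \<in> GL2"
  shows "component (vclass (fst k)) = (\<lambda>h. vclass (fst h)) ` coset_act GE2 k"
proof
  show "component (vclass (fst k)) \<subseteq> (\<lambda>h. vclass (fst h)) ` coset_act GE2 k"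
  proof
    fix Y assume Y: "Y \<in> component (vclass (fst k))"
    then obtain u where u: "Y = vclass u" "unimodular u" unfolding component_def Gamma_V_def by blast
    obtain h where h: "h \<in> GL2" "fst h = u" using unimod_ext[OF u(2)] by blast
    have "Gamma_adj\<^sup>*\<^sup>* (vclass (fst k)) (vclass (fst h))" using Y u h unfolding component_def by simp
    then have "h \<in> coset_act GE2 k" using key k h(1) by blast
    then show "Y \<in> (\<lambda>h. vclass (fst h)) ` coset_act GE2 k" using u h by blast
  qed
next
  show "(\<lambda>h. vclass (fst h)) ` coset_act GE2 k \<subseteq> component (vclass (fst k))"
  proof
    fix Y assume "Y \<in> (\<lambda>h. vclass (fst h)) ` coset_act GE2 k"
    then obtain h where h: "h \<in> coset_act GE2 k" "Y = vclass (fst h)" by blast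
    have hG: "h \<in> GL2" using h(1) coset_sub k by blast
    then show "Y \<in> component (vclass (fst k))"
      unfolding component_def using key[OF k hG] h GL2_V[OF hG] by blast
  qed
qed

definition fmap :: "'a::comm_ring_1 row2 set set \<Rightarrow> 'a mat2 set" where
  "fmap C = {h. h \<in> GL2 \<and> vclass (fst h) \<in> C}"

lemma fmap_comp:
  assumes k: "k \<in> GL2"
  shows "fmap (component (vclass (fst k))) = coset_act GE2 k"
proof
  show "fmap (component (vclass (fst k))) \<subseteq> coset_act GE2 k"
  proof
    fix h assume "h \<in> fmap (component (vclass (fst k)))"
    then have h: "h \<in> GL2" "Gamma_adj\<^sup>*\<^sup>* (vclass (fst k)) (vclass (fst h))"
      unfolding fmap_def component_def by auto
    then show "h \<in> coset_act GE2 k" using key[OF k h(1)] by simp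
  qed
next
  show "coset_act GE2 k \<subseteq> fmap (component (vclass (fst k)))"
  proof
    fix h assume h: "h \<in> coset_act GE2 k"
    then have hG: "h \<in> GL2" using coset_sub[OF k] by blast
    then have "Gamma_adj\<^sup>*\<^sup>* (vclass (fst k)) (vclass (fst h))" using key[OF k hG] h by simp
    then show "h \<in> fmap (component (vclass (fst k)))"
      unfolding fmap_def component_def using hG GL2_V[OF hG] by simp
  qed
qed

lemma V_iff: "X \<in> Gamma_V \<longleftrightarrow> (\<exists>k. k \<in> GL2 \<and> X = vclass (fst k))"
proof
  assume "X \<in> Gamma_V"
  then obtain u where u: "X = vclass u" "unimodular u" unfolding Gamma_V_def by auto
  obtain k where "k \<in> GL2" "fst k = u" using unimod_ext[OF u(2)] by auto
  then show "\<exists>k. k \<in> GL2 \<and> X = vclass (fst k)" using u(1) by blast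
next
  assume "\<exists>k. k \<in> GL2 \<and> X = vclass (fst k)"
  then obtain k where "k \<in> GL2" "X = vclass (fst k)" by auto
  then show "X \<in> Gamma_V" using GL2_V by simp
qed

lemma pi0_iff: "C \<in> pi0_Gamma \<longleftrightarrow> (\<exists>k. k \<in> GL2 \<and> C = component (vclass (fst k)))"
proof
  assume "C \<in> pi0_Gamma"
  then obtain X where X: "C = component X" "X \<in> Gamma_V" unfolding pi0_Gamma_def by auto
  then obtain k where "k \<in> GL2" "X = vclass (fst k)" using V_iff by blast
  then show "\<exists>k. k \<in> GL2 \<and> C = component (vclass (fst k))" using X(1) by blast
next
  assume "\<exists>k. k \<in> GL2 \<and> C = component (vclass (fst k))"
  then obtain k where k: "k \<in> GL2" "C = component (vclass (fst k))" by auto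
  have "vclass (fst k) \<in> Gamma_V" using GL2_V[OF k(1)] .
  then show "C \<in> pi0_Gamma" unfolding pi0_Gamma_def using k(2) by blast
qed

lemma coset_coset: "coset_act (coset_act GE2 k) g = coset_act GE2 (mat_mult k g)"
  unfolding coset_act_def image_image mat_assoc ..

lemma cact_comp:
  assumes k: "k \<in> GL2" and g: "g \<in> GL2"
  shows "cact (component (vclass (fst k))) g = component (vclass (fst (mat_mult k g)))"
proof -
  have "cact (component (vclass (fst k))) g
      = (\<lambda>X. vact X g) ` ((\<lambda>h. vclass (fst h)) ` coset_act GE2 k)"
    unfolding cact_def comp_char[OF k] ..
  also have "\<dots> = (\<lambda>h. vclass (fst h)) ` ((\<lambda>h. mat_mult h g) ` coset_act GE2 k)"
    unfolding image_image vact_vclass fst_mat_mult ..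
  also have "\<dots> = (\<lambda>h. vclass (fst h)) ` coset_act GE2 (mat_mult k g)"
    using coset_coset[of k g] unfolding coset_act_def[of "coset_act GE2 k"] by simp
  also have "\<dots> = component (vclass (fst (mat_mult k g)))"
    using comp_char[OF GL2_mult[OF k g]] by simp
  finally show ?thesis .
qed

theorem theorem3p3:
  shows "\<exists>f :: 'a::comm_ring_1 row2 set set \<Rightarrow> 'a mat2 set.
           bij_betw f pi0_Gamma GE2_cosets
         \<and> (\<forall>C\<in>pi0_Gamma. \<forall>g\<in>GL2. cact C g \<in> pi0_Gamma \<and> f (cact C g) = coset_act (f C) g)
         \<and> (\<forall>g\<in>GL2. f (component (vclass (fst g))) = coset_act GE2 g)"
proof (intro exI[of _ fmap] conjI ballI)
  show "bij_betw fmap pi0_Gamma GE2_cosets"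
    unfolding bij_betw_def
  proof
    show "inj_on fmap pi0_Gamma"
    proof (rule inj_onI)
      fix C D assume "C \<in> pi0_Gamma" "D \<in> pi0_Gamma" "fmap C = fmap D"
      then obtain k l where kl: "k \<in> GL2" "l \<in> GL2" "C = component (vclass (fst k))"
          "D = component (vclass (fst l))" unfolding pi0_iff by blast
      then have "coset_act GE2 k = coset_act GE2 l"
        using \<open>fmap C = fmap D\<close> fmap_comp[OF kl(1)] fmap_comp[OF kl(2)] by simp
      then show "C = D" using kl(3,4) comp_char[OF kl(1)] comp_char[OF kl(2)] by simp
    qed
  next
    show "fmap ` pi0_Gamma = GE2_cosets"
    proof (intro equalityI subsetI)
      fix K assume "K \<in> fmap ` pi0_Gamma"
      then obtain C where "C \<in> pi0_Gamma" "K = fmap C" by blast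
      then obtain k where "k \<in> GL2" "K = fmap (component (vclass (fst k)))" unfolding pi0_iff by blast
      then have "k \<in> GL2" "K = coset_act GE2 k" using fmap_comp by simp_all
      then show "K \<in> GE2_cosets" unfolding GE2_cosets_def by blast
    next
      fix K assume "K \<in> GE2_cosets"
      then obtain k where k: "k \<in> GL2" "K = coset_act GE2 k" unfolding GE2_cosets_def by blast
      then have "K = fmap (component (vclass (fst k)))" using fmap_comp[OF k(1)] by simp
      moreover have "component (vclass (fst k)) \<in> pi0_Gamma" unfolding pi0_iff using k(1) by blast
      ultimately show "K \<in> fmap ` pi0_Gamma" by blast
    qed
  qed
next
  fix C g assume C: "(C :: 'a row2 set set) \<in> pi0_Gamma" and g: "(g :: 'a mat2) \<in> GL2"
  then obtain k where k: "k \<in> GL2" "C = component (vclass (fst k))" unfolding pi0_iff by blast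
  have kg: "mat_mult k g \<in> GL2" using k(1) g by (rule GL2_mult)
  show "cact C g \<in> pi0_Gamma" unfolding pi0_iff k(2) cact_comp[OF k(1) g] using kg by blast
  show "fmap (cact C g) = coset_act (fmap C) g"
    unfolding k(2) cact_comp[OF k(1) g] fmap_comp[OF kg] fmap_comp[OF k(1)] coset_coset ..
next
  fix g :: "'a mat2" assume "g \<in> GL2"
  then show "fmap (component (vclass (fst g))) = coset_act GE2 g" by (rule fmap_comp)
qed

end
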